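(* For any positive integers $k$ and $q$ with $q\ge2$, no two distinct points of $D_{q,k}$ are scalar multiples of each other.
   Context: For positive integers $q,k$ with $k\ge2$, let $X_{q,k}=\prod_{j=1}^{k-1}(q^{k+j}+q^{k-j}+1)$ and let $D_{q,k}\subseteq\mathbb{Z}^2$ consist of the points $\frac{X_{q,k}}{q^{k+j}+q^{k-j}+1}\left(q^{k+j}-q^{k-j},\,-q^j-2q^k\right)$ for $j=1,\ldots,k-1$. *)

theory Defs
  imports Complex_Main
begin

definition Xqk :: "int \<Rightarrow> nat \<Rightarrow> int" where
  "Xqk q k = (\<Prod>j=1..k-1. q^(k+j) + q^(k-j) + 1)"

definition Dpt :: "int \<Rightarrow> nat \<Rightarrow> nat \<Rightarrow> int \<times> int" where
  "Dpt q k j = (let c = Xqk q k div (q^(k+j) + q^(k-j) + 1)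
                in (c * (q^(k+j) - q^(k-j)), c * (- (q^j) - 2 * q^k)))"

definition Dqk :: "int \<Rightarrow> nat \<Rightarrow> (int \<times> int) set" where
  "Dqk q k = Dpt q k ` {1..k-1}"

end

theory Submission
  imports Defs
begin

lemma key:
  fixes K s t A B :: int
  assumes "0 < s" "s < t" "A*s = K" "B*t = K" "K > 0"
  shows "(K*s - A)*(t+2*K) < (K*t-B)*(s+2*K)"
proof -
  have st: "s*t > 0" using assms by simp
  have e1: "s*t*((K*s - A)*(t+2*K)) = t*(K*s*s-K)*(t+2*K)" using assms(3)
    by (simp add: algebra_simps) (metis mult.assoc mult.commute)
  have e2: "s*t*((K*t - B)*(s+2*K)) = s*(K*t*t-K)*(s+2*K)" using assms(4)
    by (simp add: algebra_simps) (metis mult.assoc mult.commute)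
  have d: "s*(K*t*t-K)*(s+2*K) - t*(K*s*s-K)*(t+2*K) = K*(2*K*s*t*(t-s) + (t*t-s*s) + 2*K*(t-s))"
    by (simp add: algebra_simps)
  have p1: "2*K*s*t*(t-s) > 0" using assms by simp
  have p2: "t*t-s*s > 0" using assms by (simp add: mult_strict_mono)
  have p3: "2*K*(t-s) > 0" using assms by simp
  have "s*t*((K*s - A)*(t+2*K)) < s*t*((K*t - B)*(s+2*K))"
    using e1 e2 d p1 p2 p3 assms(5) by (smt (verit) mult_pos_pos)
  thus ?thesis using st by (simp add: mult_less_cancel_left_pos)
qed

lemma cpos:
  fixes q :: int assumes "q \<ge> 2" "j \<in> {1..k-1}"
  shows "Xqk q k div (q^(k+j) + q^(k-j) + 1) > 0"
proof -
  have pos: "\<And>i. q^(k+i) + q^(k-i) + 1 > 0" using assms by (simp add: add_pos_pos)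
  have dv: "(q^(k+j) + q^(k-j) + 1) dvd Xqk q k" unfolding Xqk_def
    using assms(2) by (intro dvd_prodI) auto
  have X: "Xqk q k > 0" unfolding Xqk_def using pos by (intro prod_pos) auto
  show ?thesis using dv X pos[of j]
    by (metis dvd_div_mult_self mult_pos_pos neg_0_less_iff_less pos_imp_zdiv_pos_iff zero_less_mult_pos2 linorder_not_le div_pos_pos_trivial less_le_not_le order.strict_iff_not zdiv_eq_0_iff dvd_imp_le)
qed

lemma lt_pair:
  fixes q :: int assumes q: "q \<ge> 2" and j: "j \<in> {1..k-1}" and j': "j' \<in> {1..k-1}" and lt: "j < j'"
  shows "(q^(k+j) - q^(k-j))*(q^j' + 2*q^k) < (q^(k+j') - q^(k-j'))*(q^j + 2*q^k)"
proof -
  have a: "q^(k+j) = q^k*q^j" "q^(k+j') = q^k*q^j'" by (simp_all add: power_add)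
  have b: "q^(k-j)*q^j = q^k" "q^(k-j')*q^j' = q^k" using j j'
    by (auto simp add: power_add[symmetric])
  have "q^j < q^j'" using q lt by (simp add: power_strict_increasing)
  moreover have "q^j > 0" "q^k > 0" using q by simp_all
  ultimately show ?thesis using key[OF _ _ b(1) b(2)] unfolding a by (simp add: algebra_simps)
qed

theorem lemma5:
  fixes q :: int and k :: nat
  assumes "k \<ge> 1" and "q \<ge> 2"
  shows "\<forall>u\<in>Dqk q k. \<forall>v\<in>Dqk q k. u \<noteq> v \<longrightarrow>
           \<not> (\<exists>c::real. real_of_int (fst u) = c * real_of_int (fst v) \<and>
                        real_of_int (snd u) = c * real_of_int (snd v))"
proof (intro ballI impI notI)
  fix u v assume u: "u \<in> Dqk q k" and v: "v \<in> Dqk q k" and ne: "u \<noteq> v"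
  assume "\<exists>c::real. real_of_int (fst u) = c * real_of_int (fst v) \<and>
                        real_of_int (snd u) = c * real_of_int (snd v)"
  then obtain c :: real where c1: "real_of_int (fst u) = c * real_of_int (fst v)"
     and c2: "real_of_int (snd u) = c * real_of_int (snd v)" by blast
  have "real_of_int (fst u) * real_of_int (snd v) = real_of_int (fst v) * real_of_int (snd u)"
    using c1 c2 by simp
  hence cross: "fst u * snd v = fst v * snd u" by (metis of_int_eq_iff of_int_mult)
  obtain j where j: "j \<in> {1..k-1}" and uj: "u = Dpt q k j" using u unfolding Dqk_def by blast
  obtain j' where j': "j' \<in> {1..k-1}" and vj: "v = Dpt q k j'" using v unfolding Dqk_def by blast
  have "j \<noteq> j'" using ne uj vj by blast
  define cu where "cu = Xqk q k div (q^(k+j) + q^(k-j) + 1)"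
  define cv where "cv = Xqk q k div (q^(k+j') + q^(k-j') + 1)"
  have cu: "cu > 0" unfolding cu_def using cpos[OF assms(2) j] .
  have cv: "cv > 0" unfolding cv_def using cpos[OF assms(2) j'] .
  define P where "P = (\<lambda>i. (q^(k+i) - q^(k-i))*(q^j' + 2*q^k))"
  have eq: "(q^(k+j) - q^(k-j))*(q^j' + 2*q^k) = (q^(k+j') - q^(k-j'))*(q^j + 2*q^k)"
  proof -
    have "cu*cv*((q^(k+j) - q^(k-j))*(q^j' + 2*q^k)) = cu*cv*((q^(k+j') - q^(k-j'))*(q^j + 2*q^k))"
      using cross unfolding uj vj Dpt_def Let_def cu_def[symmetric] cv_def[symmetric]
      by (simp add: algebra_simps)
    thus ?thesis using cu cv by simp
  qed
  show False
  proof (cases "j < j'")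
    case True then show ?thesis using lt_pair[OF assms(2) j j'] eq by simp
  next
    case False then have "j' < j" using \<open>j \<noteq> j'\<close> by simp
    then show ?thesis using lt_pair[OF assms(2) j' j] eq by simp
  qed
qed

end
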